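(* Let $I\subset\mathbb{R}$ be an open interval and let $\alpha:I\to\mathbb{R}$ be a smooth function with $\alpha>0$ and $\alpha'\neq 0$ on $I$. Consider the rotational surface $M$ in $(\mathbb{R}^3,\|\cdot\|)$ parametrized by $f(u,v)=(\alpha(u)\cos v,\ \alpha(u)\sin v,\ u)$, $u\in I$. Then $M$ is flat (i.e. its Minkowski Gaussian curvature $K$ vanishes identically) if and only if $\alpha(u)=au+b$ on $I$ for constants $a\neq 0$ and $b$, i.e. $M$ is (part of) a circular cone with axis the $x_3$-axis.
   Context: Fix an integer $m\ge 2$. Let $\Phi(x_1,x_2,x_3)=(x_1^2+x_2^2)^m+x_3^{2m}$ and let $\|\cdot\|$ be the norm on $\mathbb{R}^3$ whose unit sphere is $S=\{x\in\mathbb{R}^3:\Phi(x)=1\}$ (a smooth, strictly convex surface). For a real number $t$ and an integer $k$, $t^{k/(2m-1)}$ means $(t^{1/(2m-1)})^k$ with the real odd root. For a surface given by a parametrization $f(s,v)$, its Birkhoff–Gauss map $\eta$ is the map into $S$ defined by requiring $\eta\in S$ and $\nabla\Phi(\eta)=\mu\, f_s\times f_v$ for some function $\mu>0$, where $\times$ is the standard cross product (so the tangent plane of $S$ at $\eta(p)$ is parallel to $T_pM$, and $d\eta_p$ is an endomorphism of $T_pM$). The Minkowski Gaussian curvature is $K=\det(d\eta_p)$ and the Minkowski mean curvature is $H=\tfrac12\operatorname{trace}(d\eta_p)$. The surface is flat if $K\equiv 0$ and minimal if $H\equiv 0$. *)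

theory Defs
  imports "HOL-Analysis.Analysis"
begin

definition smooth_on :: "real set \<Rightarrow> (real \<Rightarrow> real) \<Rightarrow> bool" where
  "smooth_on I g \<longleftrightarrow> (\<exists>D :: nat \<Rightarrow> real \<Rightarrow> real. D 0 = g \<and>
      (\<forall>n. \<forall>x\<in>I. (D n has_real_derivative D (Suc n) x) (at x)))"

definition Phi :: "nat \<Rightarrow> real^3 \<Rightarrow> real" where
  "Phi m x = ((x$1)^2 + (x$2)^2)^m + (x$3)^(2*m)"

definition gradPhi :: "nat \<Rightarrow> real^3 \<Rightarrow> real^3" where
  "gradPhi m x = vector
     [2 * real m * x$1 * ((x$1)^2 + (x$2)^2)^(m - 1),
      2 * real m * x$2 * ((x$1)^2 + (x$2)^2)^(m - 1),
      2 * real m * (x$3)^(2*m - 1)]"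

definition partial_s :: "(real \<times> real \<Rightarrow> real^3) \<Rightarrow> real \<times> real \<Rightarrow> real^3" where
  "partial_s F p = vector_derivative (\<lambda>s. F (s, snd p)) (at (fst p))"

definition partial_v :: "(real \<times> real \<Rightarrow> real^3) \<Rightarrow> real \<times> real \<Rightarrow> real^3" where
  "partial_v F p = vector_derivative (\<lambda>v. F (fst p, v)) (at (snd p))"

definition BG_map :: "nat \<Rightarrow> (real \<times> real \<Rightarrow> real^3) \<Rightarrow> real \<times> real \<Rightarrow> real^3" where
  "BG_map m f p = (THE e. Phi m e = 1 \<and>
      (\<exists>\<mu>>0. gradPhi m e = \<mu> *\<^sub>R cross3 (partial_s f p) (partial_v f p)))"

text \<open>Minkowski Gaussian curvature K = det(d eta_p), where d eta_p is the endomorphism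
  of T_pM with matrix [[a,b],[c,d]] in the basis f_s, f_v:
  eta_s = a f_s + c f_v and eta_v = b f_s + d f_v.\<close>
definition mink_gauss_curv :: "nat \<Rightarrow> (real \<times> real \<Rightarrow> real^3) \<Rightarrow> real \<times> real \<Rightarrow> real" where
  "mink_gauss_curv m f p = (THE k. \<exists>a b c d.
      partial_s (BG_map m f) p = a *\<^sub>R partial_s f p + c *\<^sub>R partial_v f p \<and>
      partial_v (BG_map m f) p = b *\<^sub>R partial_s f p + d *\<^sub>R partial_v f p \<and>
      k = a * d - b * c)"

definition rot_surface :: "(real \<Rightarrow> real) \<Rightarrow> real \<times> real \<Rightarrow> real^3" where
  "rot_surface \<alpha> p = vector [\<alpha> (fst p) * cos (snd p), \<alpha> (fst p) * sin (snd p), fst p]"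

end

theory Submission
  imports Defs
begin


lemma vec3_decomp: "vector [a,b,c] = a *\<^sub>R (vector[1,0,0]::real^3) + b *\<^sub>R vector[0,1,0] + c *\<^sub>R vector[0,0,1]"
  by (simp add: vec_eq_iff forall_3)

lemma vec3_deriv:
  assumes "(f1 has_real_derivative a) (at x)" "(f2 has_real_derivative b) (at x)"
    "(f3 has_real_derivative c) (at x)"
  shows "((\<lambda>t. vector [f1 t, f2 t, f3 t] :: real^3) has_vector_derivative vector[a,b,c]) (at x)"
proof -
  have e: "(\<lambda>t. vector [f1 t, f2 t, f3 t] :: real^3) = (\<lambda>t. f1 t *\<^sub>R (vector[1,0,0]::real^3) + f2 t *\<^sub>R vector[0,1,0] + f3 t *\<^sub>R vector[0,0,1])"
    by (rule ext, rule vec3_decomp)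
  show ?thesis unfolding e vec3_decomp[of a b c]
    by (auto intro!: derivative_eq_intros assms)
qed

lemma partial_rot_s:
  assumes "(\<alpha> has_real_derivative A) (at u)"
  shows "partial_s (rot_surface \<alpha>) (u,v) = vector[A * cos v, A * sin v, 1]"
  unfolding partial_s_def rot_surface_def
  by (auto intro!: vector_derivative_at vec3_deriv derivative_eq_intros assms)

lemma partial_rot_v:
  shows "partial_v (rot_surface \<alpha>) (u,v) = vector[- \<alpha> u * sin v, \<alpha> u * cos v, 0]"
  unfolding partial_v_def rot_surface_def
  by (auto intro!: vector_derivative_at vec3_deriv derivative_eq_intros)

lemma cross_rot: "cross3 (vector[A * cos v, A * sin v, 1]) (vector[- a * sin v, a * cos v, 0])
   = vector[- a * cos v, - a * sin v, a * A]"
proof -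
  have "A * (a * (cos v)\<^sup>2) + A * (a * (sin v)\<^sup>2) = A * a * ((sin v)\<^sup>2 + (cos v)\<^sup>2)" by algebra
  then show ?thesis by (simp add: cross3_def vec_eq_iff forall_3 algebra_simps power2_eq_square[symmetric])
qed



lemma bg_eq:
  fixes m :: nat and a A v :: real
  assumes m: "m \<ge> 1" and a: "a > 0"
  defines "w \<equiv> root (2*m-1) A"
  defines "q \<equiv> 1 + w^(2*m)"
  defines "\<rho> \<equiv> q powr (-1/(2*m))"
  shows "(THE e. Phi m e = 1 \<and> (\<exists>\<mu>>0. gradPhi m e = \<mu> *\<^sub>R vector[-a* cos v, -a* sin v, a*A]))
     = vector[-\<rho>* cos v, -\<rho>* sin v, \<rho>*w]"
proof -
  obtain k where k: "m = Suc k" using m by (cases m) auto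
  have m1: "2*m-1 = 2*k+1" "m - 1 = k" "2*m = Suc (2*k+1)" using k by auto
  have w2: "w^(2*m) \<ge> 0" by (simp add: zero_le_even_power)
  have q: "q > 0" unfolding q_def using w2 by linarith
  have rho: "\<rho> > 0" unfolding \<rho>_def using q by simp
  have rq: "\<rho>^(2*m) * q = 1"
  proof -
    have "\<rho>^(2*m) = q powr (real (2*m) * (-1/(2*m)))" unfolding \<rho>_def using q by (simp add: powr_power)
    also have "\<dots> = q powr (-1)" using m by simp
    finally show ?thesis using q by (simp add: powr_minus)
  qed
  have wA: "w^(2*k+1) = A" unfolding w_def m1(1) by (rule odd_real_root_pow) simp
  let ?N = "vector[-a* cos v, -a* sin v, a*A] :: real^3"
  let ?E = "vector[-\<rho>* cos v, -\<rho>* sin v, \<rho>*w] :: real^3"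
  show ?thesis
  proof (rule the_equality)
    have s: "(-\<rho>* cos v)^2 + (-\<rho>* sin v)^2 = \<rho>^2"
    proof -
      have "(-\<rho>* cos v)^2 + (-\<rho>* sin v)^2 = \<rho>^2 * ((sin v)^2 + (cos v)^2)" by algebra
      then show ?thesis by simp
    qed
    have "Phi m ?E = (\<rho>^2)^m + (\<rho>*w)^(2*m)" unfolding Phi_def vector_3 s by (rule refl)
    also have "\<dots> = \<rho>^(2*m) * q" unfolding q_def by (simp add: power_mult[symmetric] power_mult_distrib algebra_simps)
    finally have P: "Phi m ?E = 1" using rq by simp
    define \<mu> where "\<mu> = 2 * real m * \<rho>^(2*k+1) / a"
    have mu: "\<mu> > 0" unfolding \<mu>_def using rho a m by simp
    have G: "gradPhi m ?E = \<mu> *\<^sub>R ?N"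
    proof -
      have wA': "w * w^(k*2) = A" using wA by (simp add: mult.commute)
      show ?thesis
      unfolding gradPhi_def vector_3 s m1(1,2) \<mu>_def using a
      by (simp add: vec_eq_iff forall_3 power_mult_distrib wA' power_mult[symmetric] field_simps)
    qed
    show "Phi m ?E = 1 \<and> (\<exists>\<mu>>0. gradPhi m ?E = \<mu> *\<^sub>R ?N)" using P mu G by blast
  next
    fix e assume "Phi m e = 1 \<and> (\<exists>\<mu>>0. gradPhi m e = \<mu> *\<^sub>R ?N)"
    then obtain \<mu> where P: "Phi m e = 1" and mu: "\<mu> > 0" and G: "gradPhi m e = \<mu> *\<^sub>R ?N" by blast
    define s where "s = (e$1)^2 + (e$2)^2"
    define c where "c = \<mu> * a / (2 * real m)"
    have c: "c > 0" unfolding c_def using mu a m by simp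
    have g1: "e$1 * s^k = - c * cos v" using arg_cong[OF G, of "\<lambda>x. x$1"] m
      unfolding gradPhi_def s_def[symmetric] m1 c_def by (simp add: field_simps)
    have g2: "e$2 * s^k = - c * sin v" using arg_cong[OF G, of "\<lambda>x. x$2"] m
      unfolding gradPhi_def s_def[symmetric] m1 c_def by (simp add: field_simps)
    have g3: "(e$3)^(2*k+1) = c * A" using arg_cong[OF G, of "\<lambda>x. x$3"] m
      unfolding gradPhi_def s_def[symmetric] m1 c_def by (simp add: field_simps)
    have "s^(2*k+1) = c^2"
    proof -
      have "s^(2*k+1) = s * (s^k)^2" by (metis power_Suc power_mult mult.commute Suc_eq_plus1)
      also have "\<dots> = (e$1 * s^k)^2 + (e$2 * s^k)^2" unfolding s_def by algebra
      also have "\<dots> = c^2 * ((sin v)^2 + (cos v)^2)" unfolding g1 g2 by algebra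
      finally show ?thesis by simp
    qed
    note sc = this
    have s0: "s \<ge> 0" unfolding s_def by simp
    have spos: "s > 0"
    proof (rule ccontr)
      assume "\<not> s > 0" then have "s = 0" using s0 by simp
      then show False using sc c by simp
    qed
    define t where "t = sqrt s"
    have t: "t > 0" "t^2 = s" unfolding t_def using spos by auto
    have tc: "t^(2*k+1) = c"
    proof (rule power_eq_imp_eq_base[of _ 2])
      have "(t^(2*k+1))^2 = (t^2)^(2*k+1)" by (simp only: power_mult[symmetric] mult.commute)
      then show "(t^(2*k+1))^2 = c^2" using sc t by simp
    qed (use t c in auto)
    have sk: "s^k = t^(2*k)" using t by (simp add: power_mult)
    have tk: "t^(2*k) > 0" using t by simp
    have e1: "e$1 = - t * cos v"
    proof -
      have "e$1 * t^(2*k) = (- t * cos v) * t^(2*k)" using g1 tc unfolding sk by (simp add: algebra_simps)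
      then show ?thesis using tk by (metis less_irrefl mult_right_cancel)
    qed
    have e2: "e$2 = - t * sin v"
    proof -
      have "e$2 * t^(2*k) = (- t * sin v) * t^(2*k)" using g2 tc unfolding sk by (simp add: algebra_simps)
      then show ?thesis using tk by (metis less_irrefl mult_right_cancel)
    qed
    have e3: "e$3 = t * w"
    proof -
      have "(e$3)^(2*k+1) = (t*w)^(2*k+1)" unfolding power_mult_distrib g3 tc wA ..
      then have "root (2*k+1) ((e$3)^(2*k+1)) = root (2*k+1) ((t*w)^(2*k+1))" by simp
      moreover have "odd (2*k+1)" by simp
      ultimately show ?thesis by (metis odd_real_root_power_cancel)
    qed
    have "1 = s^m + (e$3)^(2*m)" using P unfolding Phi_def s_def by simp
    also have "\<dots> = t^(2*m) * q" unfolding e3 q_def t(2)[symmetric]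
      by (simp add: power_mult[symmetric] power_mult_distrib algebra_simps)
    finally have "t^(2*m) = \<rho>^(2*m)" using rq q by (metis mult_right_cancel less_irrefl)
    then have "t = \<rho>" using t rho m by (auto intro: power_eq_imp_eq_base)
    then show "e = ?E" using e1 e2 e3 by (simp add: vec_eq_iff forall_3)
  qed
qed


lemma deriv_calc:
  fixes w :: "real \<Rightarrow> real" and m :: nat
  assumes m: "m \<ge> 1" and W: "(w has_real_derivative W) (at u)"
  defines "q \<equiv> \<lambda>s. 1 + w s ^ (2*m)"
  defines "\<rho> \<equiv> \<lambda>s. q s powr (-1/(2*m))"
  defines "P \<equiv> q u powr (-1/(2*m) - 1)"
  shows "(\<rho> has_real_derivative (- P * w u ^ (2*m-1) * W)) (at u)"
    and "((\<lambda>s. \<rho> s * w s) has_real_derivative P * W) (at u)"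
    and "P > 0"
proof -
  have w2: "w u^(2*m) \<ge> 0" by (simp add: zero_le_even_power)
  have q: "q u > 0" unfolding q_def using w2 by linarith
  show P: "P > 0" unfolding P_def using q by simp
  have dq: "(q has_real_derivative (real (2*m) * w u ^ (2*m-1) * W)) (at u)"
    unfolding q_def by (auto intro!: derivative_eq_intros W)
  have "(\<rho> has_real_derivative (-1/(2*m)) * q u powr (-1/(2*m) - 1) * (real (2*m) * w u ^ (2*m-1) * W)) (at u)"
    unfolding \<rho>_def using dq q by (rule DERIV_fun_powr[simplified])
  moreover have "(-1/(2*m)) * q u powr (-1/(2*m) - 1) * (real (2*m) * w u ^ (2*m-1) * W) = - P * w u ^ (2*m-1) * W"
    unfolding P_def using m by (simp add: field_simps)
  ultimately show dr: "(\<rho> has_real_derivative (- P * w u ^ (2*m-1) * W)) (at u)" by simp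
  have rq: "\<rho> u = P * q u"
  proof -
    have "P * q u = q u powr (-1/(2*m) - 1) * q u powr 1" unfolding P_def using q by simp
    also have "\<dots> = q u powr (-1/(2*m) - 1 + 1)" by (simp only: powr_add[symmetric])
    also have "\<dots> = q u powr (-1/(2*m))" by simp
    finally show ?thesis unfolding \<rho>_def by simp
  qed
  have "((\<lambda>s. \<rho> s * w s) has_real_derivative (- P * w u ^ (2*m-1) * W) * w u + \<rho> u * W) (at u)"
    using DERIV_mult[OF dr W] by (simp add: algebra_simps)
  moreover have "(- P * w u ^ (2*m-1) * W) * w u + \<rho> u * W = P * W"
  proof -
    have "w u ^ (2*m-1) * w u = w u ^(2*m)" 
    proof -
      have "Suc (2*m-1) = 2*m" using m by simp
      then show ?thesis by (metis power_Suc2)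
    qed
    then show ?thesis unfolding rq q_def by (simp add: algebra_simps)
  qed
  ultimately show "((\<lambda>s. \<rho> s * w s) has_real_derivative P * W) (at u)" by simp
qed



lemma curv_calc:
  fixes a \<rho> R Z A v :: real
  assumes a: "a > 0" and R: "- R = Z * A"
  shows "(THE k. \<exists>a' b c d.
      (vector[- R * cos v, - R * sin v, Z]::real^3) = a' *\<^sub>R vector[A * cos v, A * sin v, 1] + c *\<^sub>R vector[- a * sin v, a * cos v, 0] \<and>
      (vector[\<rho> * sin v, - \<rho> * cos v, 0]::real^3) = b *\<^sub>R vector[A * cos v, A * sin v, 1] + d *\<^sub>R vector[- a * sin v, a * cos v, 0] \<and>
      k = a' * d - b * c) = - Z * \<rho> / a"
proof (rule the_equality)
  have sc: "(sin v)^2 + (cos v)^2 = 1" by simp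
  show "\<exists>a' b c d.
      (vector[- R * cos v, - R * sin v, Z]::real^3) = a' *\<^sub>R vector[A * cos v, A * sin v, 1] + c *\<^sub>R vector[- a * sin v, a * cos v, 0] \<and>
      (vector[\<rho> * sin v, - \<rho> * cos v, 0]::real^3) = b *\<^sub>R vector[A * cos v, A * sin v, 1] + d *\<^sub>R vector[- a * sin v, a * cos v, 0] \<and>
      - Z * \<rho> / a = a' * d - b * c"
    apply (rule exI[of _ Z], rule exI[of _ 0], rule exI[of _ 0], rule exI[of _ "- \<rho> / a"])
    using a R by (simp add: vec_eq_iff forall_3 field_simps)
next
  fix k assume "\<exists>a' b c d.
      (vector[- R * cos v, - R * sin v, Z]::real^3) = a' *\<^sub>R vector[A * cos v, A * sin v, 1] + c *\<^sub>R vector[- a * sin v, a * cos v, 0] \<and>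
      (vector[\<rho> * sin v, - \<rho> * cos v, 0]::real^3) = b *\<^sub>R vector[A * cos v, A * sin v, 1] + d *\<^sub>R vector[- a * sin v, a * cos v, 0] \<and>
      k = a' * d - b * c"
  then obtain a' b c d where
    E1: "(vector[- R * cos v, - R * sin v, Z]::real^3) = a' *\<^sub>R vector[A * cos v, A * sin v, 1] + c *\<^sub>R vector[- a * sin v, a * cos v, 0]"
    and E2: "(vector[\<rho> * sin v, - \<rho> * cos v, 0]::real^3) = b *\<^sub>R vector[A * cos v, A * sin v, 1] + d *\<^sub>R vector[- a * sin v, a * cos v, 0]"
    and k: "k = a' * d - b * c" by blast
  have a1: "- R * cos v = a' * A * cos v - c * a * sin v" "- R * sin v = a' * A * sin v + c * a * cos v" "Z = a'"
    using arg_cong[OF E1, of "\<lambda>x. x$1"] arg_cong[OF E1, of "\<lambda>x. x$2"] arg_cong[OF E1, of "\<lambda>x. x$3"] by simp_all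
  have b1: "\<rho> * sin v = b * A * cos v - d * a * sin v" "- \<rho> * cos v = b * A * sin v + d * a * cos v" "0 = b"
    using arg_cong[OF E2, of "\<lambda>x. x$1"] arg_cong[OF E2, of "\<lambda>x. x$2"] arg_cong[OF E2, of "\<lambda>x. x$3"] by simp_all
  have "c * a * ((sin v)^2 + (cos v)^2) = 0"
  proof -
    have "c * a * ((sin v)^2 + (cos v)^2) = (a' * A * cos v - (- R * cos v)) * sin v + (- R * sin v - a' * A * sin v) * cos v"
      unfolding a1(1) a1(2) by algebra
    then show ?thesis using R a1(3) by (simp add: algebra_simps)
  qed
  then have c: "c = 0" using a by simp
  have "d * a * ((sin v)^2 + (cos v)^2) = - \<rho> * ((sin v)^2 + (cos v)^2)"
  proof -
    have "d * a * ((sin v)^2 + (cos v)^2) = - (\<rho> * sin v) * sin v + (- \<rho> * cos v) * cos v"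
      unfolding b1(1) b1(2) b1(3)[symmetric] by algebra
    then show ?thesis by algebra
  qed
  then have "d = - \<rho> / a" using a by (simp add: field_simps)
  then show "k = - Z * \<rho> / a" using k c a1(3) b1(3) by simp
qed


theorem proposition3p1:
  fixes m :: nat and I :: "real set" and \<alpha> :: "real \<Rightarrow> real"
  assumes "m \<ge> 2"
    and "open I" and "is_interval I" and "I \<noteq> {}"
    and "smooth_on I \<alpha>"
    and "\<forall>u\<in>I. \<alpha> u > 0"
    and "\<forall>u\<in>I. deriv \<alpha> u \<noteq> 0"
  shows "(\<forall>u\<in>I. \<forall>v. mink_gauss_curv m (rot_surface \<alpha>) (u, v) = 0) \<longleftrightarrow>
         (\<exists>a b. a \<noteq> 0 \<and> (\<forall>u\<in>I. \<alpha> u = a * u + b))"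
proof -
  note assms' = assms
  have m1: "m \<ge> 1" using assms(1) by simp
  obtain D where D0: "D 0 = \<alpha>" and DD: "\<forall>n. \<forall>x\<in>I. (D n has_real_derivative D (Suc n) x) (at x)"
    using assms(5) unfolding smooth_on_def by blast
  have da: "(\<alpha> has_real_derivative D 1 u) (at u)" if "u \<in> I" for u
    using DD that D0 by (metis One_nat_def)
  have d1: "(D 1 has_real_derivative D 2 u) (at u)" if "u \<in> I" for u
    using DD that by (metis Suc_1)
  have D1nz: "D 1 u \<noteq> 0" if "u \<in> I" for u
    using assms(7) that DERIV_imp_deriv[OF da[OF that]] by force
  have apos: "\<alpha> u > 0" if "u \<in> I" for u using assms(6) that by simp
  define w where "w = (\<lambda>s. root (2*m-1) (D 1 s))"
  define \<rho> where "\<rho> = (\<lambda>s. (1 + w s ^ (2*m)) powr (-1/(2*m)))"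
  define W where "W = (\<lambda>u. inverse (real (2*m-1) * root (2*m-1) (D 1 u) ^ (2*m-1 - Suc 0)) * D 2 u)"
  have odd: "odd (2*m-1)" using m1 by simp
  have dw: "(w has_real_derivative W u) (at u)" if "u \<in> I" for u
    unfolding w_def W_def
    by (rule DERIV_chain2[OF DERIV_odd_real_root[OF odd D1nz[OF that]] d1[OF that]])
  have wpow: "w u ^ (2*m-1) = D 1 u" for u unfolding w_def using odd by (rule odd_real_root_pow)
  have BG: "BG_map m (rot_surface \<alpha>) (u,v) = vector[- \<rho> u * cos v, - \<rho> u * sin v, \<rho> u * w u]"
    if "u \<in> I" for u v
    unfolding BG_map_def partial_rot_s[OF da[OF that]] partial_rot_v cross_rot
    unfolding \<rho>_def w_def
    by (rule bg_eq[OF m1 apos[OF that]])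
  define P where "P = (\<lambda>u. (1 + w u ^ (2*m)) powr (-1/(2*m) - 1))"
  have dr: "(\<rho> has_real_derivative (- P u * w u ^ (2*m-1) * W u)) (at u)"
    and dz: "((\<lambda>s. \<rho> s * w s) has_real_derivative P u * W u) (at u)"
    and Ppos: "P u > 0" if "u \<in> I" for u
    using deriv_calc[OF m1 dw[OF that]] unfolding \<rho>_def P_def by auto
  have rpos: "\<rho> u > 0" for u
  proof -
    have "w u^(2*m) \<ge> 0" by (simp add: zero_le_even_power)
    then have "1 + w u ^ (2*m) > 0" by linarith
    then show ?thesis unfolding \<rho>_def by simp
  qed
  have PS: "partial_s (BG_map m (rot_surface \<alpha>)) (u,v)
      = vector[- (- P u * w u ^ (2*m-1) * W u) * cos v, - (- P u * w u ^ (2*m-1) * W u) * sin v, P u * W u]"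
    if "u \<in> I" for u v
  proof -
    have "((\<lambda>s. vector[- \<rho> s * cos v, - \<rho> s * sin v, \<rho> s * w s] :: real^3) has_vector_derivative
       vector[- (- P u * w u ^ (2*m-1) * W u) * cos v, - (- P u * w u ^ (2*m-1) * W u) * sin v, P u * W u]) (at u)"
      by (intro vec3_deriv DERIV_cmult_right DERIV_minus dr[OF that] dz[OF that])
    then have "((\<lambda>s. BG_map m (rot_surface \<alpha>) (s,v)) has_vector_derivative
       vector[- (- P u * w u ^ (2*m-1) * W u) * cos v, - (- P u * w u ^ (2*m-1) * W u) * sin v, P u * W u]) (at u)"
      by (rule has_vector_derivative_transform_within_open[OF _ assms(2) that]) (simp add: BG)
    then show ?thesis unfolding partial_s_def by (simp add: vector_derivative_at)
  qed
  have PV: "partial_v (BG_map m (rot_surface \<alpha>)) (u,v) = vector[\<rho> u * sin v, - \<rho> u * cos v, 0]"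
    if "u \<in> I" for u v
  proof -
    have e: "(\<lambda>v'. BG_map m (rot_surface \<alpha>) (u,v')) = (\<lambda>v'. vector[- \<rho> u * cos v', - \<rho> u * sin v', \<rho> u * w u])"
      using BG[OF that] by auto
    have "((\<lambda>v'. vector[- \<rho> u * cos v', - \<rho> u * sin v', \<rho> u * w u] :: real^3) has_vector_derivative
        vector[\<rho> u * sin v, - \<rho> u * cos v, 0]) (at v)"
      by (intro vec3_deriv) (auto intro!: derivative_eq_intros)
    then show ?thesis unfolding partial_v_def fst_conv snd_conv e by (simp add: vector_derivative_at)
  qed
  have K: "mink_gauss_curv m (rot_surface \<alpha>) (u,v) = - (P u * W u) * \<rho> u / \<alpha> u" if "u \<in> I" for u v
    unfolding mink_gauss_curv_def PS[OF that] PV[OF that] partial_rot_s[OF da[OF that]] partial_rot_v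
    by (rule curv_calc[OF apos[OF that]]) (simp add: wpow[of u, simplified])
  have Wz: "W u = 0 \<longleftrightarrow> D 2 u = 0" if "u \<in> I" for u
  proof -
    have "root (2*m-1) (D 1 u) \<noteq> 0" using D1nz[OF that] m1 by simp
    moreover have "real (2*m-1) \<noteq> 0" using m1 by simp
    ultimately show ?thesis unfolding W_def by simp
  qed
  have KD: "mink_gauss_curv m (rot_surface \<alpha>) (u,v) = 0 \<longleftrightarrow> D 2 u = 0" if "u \<in> I" for u v
    using K[OF that] Wz[OF that] Ppos[OF that] rpos[of u] apos[OF that] by simp
  have "(\<forall>u\<in>I. \<forall>v. mink_gauss_curv m (rot_surface \<alpha>) (u, v) = 0) \<longleftrightarrow> (\<forall>u\<in>I. D 2 u = 0)"
    using KD by blast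
  also have "\<dots> \<longleftrightarrow> (\<exists>a b. a \<noteq> 0 \<and> (\<forall>u\<in>I. \<alpha> u = a * u + b))"
  proof
    assume D2: "\<forall>u\<in>I. D 2 u = 0"
    have cvx: "convex I" using assms(3) by (rule is_interval_convex)
    obtain c where c: "\<forall>x\<in>I. D 1 x = c"
      using has_field_derivative_zero_constant[OF cvx, of "D 1"] d1 D2
      by (metis has_field_derivative_at_within)
    have "\<forall>x\<in>I. ((\<lambda>u. \<alpha> u - c * u) has_field_derivative 0) (at x within I)"
    proof
      fix x assume x: "x \<in> I"
      have "((\<lambda>u. \<alpha> u - c * u) has_field_derivative D 1 x - c) (at x)"
        using DERIV_diff[OF da[OF x] DERIV_cmult[OF DERIV_ident, of c]] by simp
      then show "((\<lambda>u. \<alpha> u - c * u) has_field_derivative 0) (at x within I)"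
        using c x by (simp add: has_field_derivative_at_within)
    qed
    then obtain b where b: "\<forall>x\<in>I. \<alpha> x - c * x = b"
      using has_field_derivative_zero_constant[OF cvx, of "\<lambda>u. \<alpha> u - c * u"] by blast
    obtain u0 where u0: "u0 \<in> I" using assms(4) by blast
    have "c \<noteq> 0" using D1nz[OF u0] c u0 by simp
    then show "\<exists>a b. a \<noteq> 0 \<and> (\<forall>u\<in>I. \<alpha> u = a * u + b)" using b
      by (intro exI[of _ c] exI[of _ b]) (auto simp: algebra_simps)
  next
    assume "\<exists>a b. a \<noteq> 0 \<and> (\<forall>u\<in>I. \<alpha> u = a * u + b)"
    then obtain a b where ab: "\<forall>u\<in>I. \<alpha> u = a * u + b" by blast
    have D1a: "D 1 u = a" if "u \<in> I" for u
    proof -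
      have "((\<lambda>u. a * u + b) has_real_derivative a) (at u)"
        using DERIV_add[OF DERIV_cmult[OF DERIV_ident, of a] DERIV_const[of b]] by simp
      then have "(\<alpha> has_real_derivative a) (at u)"
        using has_field_derivative_transform_within_open[OF _ assms(2) that, of "\<lambda>u. a * u + b" a \<alpha>] ab by force
      then show ?thesis by (rule DERIV_unique[OF da[OF that]])
    qed
    show "\<forall>u\<in>I. D 2 u = 0"
    proof
      fix u assume u: "u \<in> I"
      have "((\<lambda>_. a) has_real_derivative 0) (at u)" by simp
      then have "(D 1 has_real_derivative 0) (at u)"
        using has_field_derivative_transform_within_open[OF _ assms(2) u, of "\<lambda>_. a" 0 "D 1"] D1a by force
      then show "D 2 u = 0" by (rule DERIV_unique[OF d1[OF u]])
    qed
  qed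
  finally show ?thesis .
qed

end
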